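(* Let $X$ be a finite-dimensional real Hilbert space, $Y$ a real Hilbert space, and $\mathsf{K_h}: X \to Y$ a linear operator. Let $\{\phi_1,\dots,\phi_n\}$ be an orthonormal basis of $X$ such that $\mathsf{K_h}\phi_i \neq c\,\mathsf{K_h}\phi_j$ for all $i \neq j$ and all $c \in \mathbb{R}$. Define the linear operator $\mathsf{W}: X\to X$ by $\mathsf{W}\phi_i = \|\mathsf{P}\phi_i\|_X\,\phi_i$ for $i=1,\dots,n$, where $\mathsf{P}$ is the orthogonal projection of $X$ onto $\mathcal{N}(\mathsf{K_h})^\perp$. (Then $\|\mathsf{P}\phi_i\|_X > 0$ for all $i$, so $\mathsf{W}$ is invertible.) Fix $j \in \{1,\dots,n\}$ and let $x_j^*$ be the minimum norm least squares solution of $\mathsf{K_h}x = \mathsf{K_h}\phi_j$. Write $\mathsf{W}^{-1}x_j^* = \sum_{i=1}^n c_i \phi_i$. Then $j$ is the unique index maximizing $c_i$, i.e. $c_j > c_i$ for all $i\neq j$.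
   Context: $\mathcal{N}(\mathsf{K_h})$ is the nullspace of $\mathsf{K_h}$ and $\mathcal{N}(\mathsf{K_h})^\perp$ its orthogonal complement in $X$. The minimum norm least squares solution of $\mathsf{K_h}x=b$ is the element of smallest norm among the minimizers of $\|\mathsf{K_h}x-b\|_Y$, i.e. $\mathsf{K_h}^\dagger b$ with $\mathsf{K_h}^\dagger$ the Moore–Penrose inverse. *)

theory Defs
  imports "HOL-Analysis.Analysis"
begin

definition nullspace :: "('a::real_vector \<Rightarrow> 'b::real_vector) \<Rightarrow> 'a set" where
  "nullspace K = {x. K x = 0}"

definition orth_proj :: "'a::real_inner set \<Rightarrow> 'a \<Rightarrow> 'a" where
  "orth_proj S x = (THE p. p \<in> S \<and> x - p \<in> orthogonal_comp S)"

definition ls_solution :: "('a::real_normed_vector \<Rightarrow> 'b::real_normed_vector) \<Rightarrow> 'b \<Rightarrow> 'a \<Rightarrow> bool" where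
  "ls_solution K b x \<longleftrightarrow> (\<forall>y. norm (K x - b) \<le> norm (K y - b))"

definition mnls_solution :: "('a::real_normed_vector \<Rightarrow> 'b::real_normed_vector) \<Rightarrow> 'b \<Rightarrow> 'a" where
  "mnls_solution K b =
     (THE x. ls_solution K b x \<and> (\<forall>y. ls_solution K b y \<longrightarrow> norm x \<le> norm y))"

definition weight_op :: "('a::real_inner \<Rightarrow> 'b::real_inner) \<Rightarrow> (nat \<Rightarrow> 'a) \<Rightarrow> nat \<Rightarrow> 'a \<Rightarrow> 'a" where
  "weight_op K \<phi> n x =
     (\<Sum>i\<in>{1..n}. (norm (orth_proj (orthogonal_comp (nullspace K)) (\<phi> i)) * (x \<bullet> \<phi> i)) *\<^sub>R \<phi> i)"

end

theory Submission
  imports Defs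
begin

lemma subspace_nullspace: "linear K \<Longrightarrow> subspace (nullspace K)"
  unfolding nullspace_def subspace_def by (auto simp: linear_add linear_scale linear_0)

lemma proj_props:
  fixes K :: "'a::euclidean_space \<Rightarrow> 'b::real_inner"
  assumes lin: "linear K"
  shows "orth_proj (orthogonal_comp (nullspace K)) x \<in> orthogonal_comp (nullspace K)
       \<and> x - orth_proj (orthogonal_comp (nullspace K)) x \<in> nullspace K"
proof -
  let ?N = "nullspace K"
  have sp: "span ?N = ?N" using subspace_nullspace[OF lin] by (simp add: span_eq_iff)
  obtain y z where y: "y \<in> span ?N" and z: "\<And>w. w \<in> span ?N \<Longrightarrow> orthogonal z w" and x: "x = y + z"
    using orthogonal_subspace_decomp_exists[of ?N x] by blast
  have zN: "z \<in> orthogonal_comp ?N" using z sp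
    by (auto simp: orthogonal_comp_def orthogonal_def inner_commute)
  have yN: "y \<in> ?N" using y sp by simp
  have "orth_proj (orthogonal_comp ?N) x = z"
    unfolding orth_proj_def
  proof (rule the_equality)
    show "z \<in> orthogonal_comp ?N \<and> x - z \<in> orthogonal_comp (orthogonal_comp ?N)"
      using zN yN x orthogonal_comp_subset by auto
  next
    fix p assume p: "p \<in> orthogonal_comp ?N \<and> x - p \<in> orthogonal_comp (orthogonal_comp ?N)"
    have "z - p \<in> orthogonal_comp ?N"
      using zN p subspace_orthogonal_comp[of ?N] subspace_diff by blast
    moreover have "z - p \<in> orthogonal_comp (orthogonal_comp ?N)"
    proof -
      have "x - p - y \<in> orthogonal_comp (orthogonal_comp ?N)"
        using p yN orthogonal_comp_subset subspace_orthogonal_comp[of "orthogonal_comp ?N"] subspace_diff by blast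
      moreover have "x - p - y = z - p" using x by simp
      ultimately show ?thesis by simp
    qed
    ultimately have "orthogonal (z - p) (z - p)"
      by (auto simp: orthogonal_comp_def)
    then show "p = z" by (metis orthogonal_self right_minus_eq)
  qed
  then show ?thesis using zN yN x by simp
qed

lemma proj_K:
  fixes K :: "'a::euclidean_space \<Rightarrow> 'b::real_inner"
  assumes lin: "linear K"
  shows "K (orth_proj (orthogonal_comp (nullspace K)) x) = K x"
proof -
  have "K (x - orth_proj (orthogonal_comp (nullspace K)) x) = 0"
    using proj_props[OF lin, of x] by (simp add: nullspace_def)
  then show ?thesis by (simp add: linear_diff[OF lin])
qed

lemma comp_orth: "u \<in> orthogonal_comp S \<Longrightarrow> v \<in> S \<Longrightarrow> u \<bullet> v = 0"
  by (auto simp: orthogonal_comp_def orthogonal_def inner_commute)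

lemma mnls_proj:
  fixes K :: "'a::euclidean_space \<Rightarrow> 'b::real_inner"
  assumes lin: "linear K"
  shows "mnls_solution K (K x0) = orth_proj (orthogonal_comp (nullspace K)) x0"
proof -
  let ?P = "orth_proj (orthogonal_comp (nullspace K))"
  have ls: "ls_solution K (K x0) y \<longleftrightarrow> K y = K x0" for y
    unfolding ls_solution_def
  proof
    assume "\<forall>y'. norm (K y - K x0) \<le> norm (K y' - K x0)"
    then have "norm (K y - K x0) \<le> 0" by (metis norm_zero right_minus_eq)
    then show "K y = K x0" by simp
  qed simp
  have pyth: "(norm y)^2 = (norm (?P x0))^2 + (norm (y - ?P x0))^2" if "K y = K x0" for y
  proof -
    have "K (y - ?P x0) = 0" using that proj_K[OF lin, of x0] by (simp add: linear_diff[OF lin])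
    then have "y - ?P x0 \<in> nullspace K" by (simp add: nullspace_def)
    then have "orthogonal (?P x0) (y - ?P x0)"
      using comp_orth proj_props[OF lin, of x0] by (auto simp: orthogonal_def)
    from norm_add_Pythagorean[OF this] show ?thesis by simp
  qed
  show ?thesis
    unfolding mnls_solution_def
  proof (rule the_equality)
    show "ls_solution K (K x0) (?P x0) \<and> (\<forall>y. ls_solution K (K x0) y \<longrightarrow> norm (?P x0) \<le> norm y)"
    proof (intro conjI allI impI)
      show "ls_solution K (K x0) (?P x0)" using ls proj_K[OF lin] by simp
      fix y assume "ls_solution K (K x0) y"
      then have "(norm y)^2 = (norm (?P x0))^2 + (norm (y - ?P x0))^2" using ls pyth by simp
      then have "(norm (?P x0))^2 \<le> (norm y)^2" by simp
      then show "norm (?P x0) \<le> norm y" by (simp add: power_mono_iff)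
    qed
  next
    fix x assume x: "ls_solution K (K x0) x \<and> (\<forall>y. ls_solution K (K x0) y \<longrightarrow> norm x \<le> norm y)"
    then have "norm x \<le> norm (?P x0)" using ls proj_K[OF lin] by simp
    then have "(norm x)^2 \<le> (norm (?P x0))^2" by (simp add: power_mono)
    moreover have "(norm x)^2 = (norm (?P x0))^2 + (norm (x - ?P x0))^2" using x ls pyth by simp
    ultimately have "norm (x - ?P x0) = 0" by simp
    then show "x = ?P x0" by simp
  qed
qed

lemma coeff_inner:
  fixes \<phi> :: "nat \<Rightarrow> 'a::real_inner"
  assumes orthonormal: "\<forall>i\<in>{1..n}. \<forall>k\<in>{1..n}. \<phi> i \<bullet> \<phi> k = (if i = k then 1 else 0)"
    and k: "k \<in> {1..n}"
  shows "(\<Sum>i\<in>{1..n}. a i *\<^sub>R \<phi> i) \<bullet> \<phi> k = a k"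
proof -
  have "(\<Sum>i\<in>{1..n}. a i *\<^sub>R \<phi> i) \<bullet> \<phi> k = (\<Sum>i\<in>{1..n}. a i * (\<phi> i \<bullet> \<phi> k))"
    by (simp add: inner_sum_left)
  also have "\<dots> = (\<Sum>i\<in>{1..n}. if i = k then a i else 0)"
    using orthonormal k by (intro sum.cong) auto
  also have "\<dots> = a k" using k by simp
  finally show ?thesis .
qed

lemma expansion:
  fixes \<phi> :: "nat \<Rightarrow> 'a::euclidean_space"
  assumes orthonormal: "\<forall>i\<in>{1..n}. \<forall>k\<in>{1..n}. \<phi> i \<bullet> \<phi> k = (if i = k then 1 else 0)"
    and basis: "span (\<phi> ` {1..n}) = UNIV"
  shows "x = (\<Sum>i\<in>{1..n}. (x \<bullet> \<phi> i) *\<^sub>R \<phi> i)"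
proof -
  let ?d = "x - (\<Sum>i\<in>{1..n}. (x \<bullet> \<phi> i) *\<^sub>R \<phi> i)"
  have "orthogonal ?d y" if "y \<in> \<phi> ` {1..n}" for y
    using that coeff_inner[OF orthonormal]
    by (auto simp: orthogonal_def inner_diff_left)
  then have "orthogonal ?d a" for a
    using orthogonal_to_span[of a "\<phi> ` {1..n}" ?d] basis by blast
  then have "orthogonal ?d ?d" .
  then show ?thesis by (metis orthogonal_self right_minus_eq)
qed

theorem theorem1:
  fixes K :: "'a::euclidean_space \<Rightarrow> 'b::{real_inner, complete_space}"
    and \<phi> :: "nat \<Rightarrow> 'a" and n :: nat and j :: nat and c :: "nat \<Rightarrow> real"
  assumes lin: "linear K"
    and orthonormal: "\<forall>i\<in>{1..n}. \<forall>k\<in>{1..n}. \<phi> i \<bullet> \<phi> k = (if i = k then 1 else 0)"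
    and basis: "span (\<phi> ` {1..n}) = UNIV"
    and distinct_dirs: "\<forall>i\<in>{1..n}. \<forall>k\<in>{1..n}. i \<noteq> k \<longrightarrow> (\<forall>a::real. K (\<phi> i) \<noteq> a *\<^sub>R K (\<phi> k))"
    and j: "j \<in> {1..n}"
    and coeffs: "inv (weight_op K \<phi> n) (mnls_solution K (K (\<phi> j))) = (\<Sum>i\<in>{1..n}. c i *\<^sub>R \<phi> i)"
  shows "\<forall>i\<in>{1..n}. i \<noteq> j \<longrightarrow> c j > c i"
proof (intro ballI impI)
  fix i assume i: "i \<in> {1..n}" and ij: "i \<noteq> j"
  let ?N = "nullspace K"
  let ?P = "orth_proj (orthogonal_comp ?N)"
  define w where "w k = norm (?P (\<phi> k))" for k
  define W where "W = weight_op K \<phi> n"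
  have W: "W x = (\<Sum>k\<in>{1..n}. (w k * (x \<bullet> \<phi> k)) *\<^sub>R \<phi> k)" for x
    by (simp add: W_def weight_op_def w_def)
  have wpos: "w k > 0" if k: "k \<in> {1..n}" for k
  proof (rule ccontr)
    assume "\<not> w k > 0"
    then have "?P (\<phi> k) = 0" by (simp add: w_def)
    then have K0: "K (\<phi> k) = 0" using proj_K[OF lin, of "\<phi> k"] linear_0[OF lin] by simp
    obtain m where m: "m \<in> {1..n}" "m \<noteq> k"
    proof (cases "k = i")
      case True then show ?thesis using that j ij by metis
    next
      case False then show ?thesis using that i by metis
    qed
    have "K (\<phi> k) = 0 *\<^sub>R K (\<phi> m)" using K0 by simp
    then show False using distinct_dirs[rule_format, OF k m(1) m(2)[symmetric], of 0] by contradiction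
  qed
  have Wcoef: "W x \<bullet> \<phi> k = w k * (x \<bullet> \<phi> k)" if "k \<in> {1..n}" for x k
    using coeff_inner[OF orthonormal that] W by simp
  have injW: "inj W"
  proof (rule injI)
    fix x y assume "W x = W y"
    then have "x \<bullet> \<phi> k = y \<bullet> \<phi> k" if "k \<in> {1..n}" for k
      using Wcoef[OF that, of x] Wcoef[OF that, of y] wpos[OF that] by simp
    then have "(\<Sum>k\<in>{1..n}. (x \<bullet> \<phi> k) *\<^sub>R \<phi> k) = (\<Sum>k\<in>{1..n}. (y \<bullet> \<phi> k) *\<^sub>R \<phi> k)"
      by (intro sum.cong) auto
    then show "x = y" using expansion[OF orthonormal basis, of x] expansion[OF orthonormal basis, of y]
      by simp
  qed
  define p where "p = ?P (\<phi> j)"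
  define d where "d = (\<Sum>k\<in>{1..n}. ((p \<bullet> \<phi> k) / w k) *\<^sub>R \<phi> k)"
  have "W d = (\<Sum>k\<in>{1..n}. (p \<bullet> \<phi> k) *\<^sub>R \<phi> k)"
    unfolding W d_def
  proof (intro sum.cong refl)
    fix k assume k: "k \<in> {1..n}"
    show "(w k * ((\<Sum>k\<in>{1..n}. ((p \<bullet> \<phi> k) / w k) *\<^sub>R \<phi> k) \<bullet> \<phi> k)) *\<^sub>R \<phi> k = (p \<bullet> \<phi> k) *\<^sub>R \<phi> k"
      using coeff_inner[OF orthonormal k, of "\<lambda>k. (p \<bullet> \<phi> k) / w k"] wpos[OF k] by simp
  qed
  also have "\<dots> = p" using expansion[OF orthonormal basis, of p] by simp
  finally have Wd: "W d = p" .
  have "inv W p = d" using inv_f_f[OF injW, of d] Wd by simp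
  then have sumeq: "(\<Sum>k\<in>{1..n}. c k *\<^sub>R \<phi> k) = d"
    using coeffs mnls_proj[OF lin] by (simp add: W_def p_def)
  have ck: "c k = (p \<bullet> \<phi> k) / w k" if "k \<in> {1..n}" for k
    using coeff_inner[OF orthonormal that, of c] coeff_inner[OF orthonormal that, of "\<lambda>k. (p \<bullet> \<phi> k) / w k"]
    sumeq unfolding d_def by simp
  have pinner: "p \<bullet> \<phi> k = p \<bullet> ?P (\<phi> k)" for k
  proof -
    have "p \<bullet> (\<phi> k - ?P (\<phi> k)) = 0"
      using comp_orth proj_props[OF lin] p_def by blast
    then show ?thesis by (simp add: inner_diff_right)
  qed
  have cj: "c j = norm p"
    using ck[OF j] pinner[of j] wpos[OF j] unfolding w_def p_def
    by (simp add: power2_norm_eq_inner[symmetric] power2_eq_square)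
  have ci: "c i = (p \<bullet> ?P (\<phi> i)) / norm (?P (\<phi> i))"
    using ck[OF i] pinner[of i] by (simp add: w_def)
  have wi: "norm (?P (\<phi> i)) > 0" using wpos[OF i] by (simp add: w_def)
  have le: "p \<bullet> ?P (\<phi> i) \<le> norm p * norm (?P (\<phi> i))" by (rule norm_cauchy_schwarz)
  have ne: "p \<bullet> ?P (\<phi> i) \<noteq> norm p * norm (?P (\<phi> i))"
  proof
    assume "p \<bullet> ?P (\<phi> i) = norm p * norm (?P (\<phi> i))"
    then have eq: "norm p *\<^sub>R ?P (\<phi> i) = norm (?P (\<phi> i)) *\<^sub>R p"
      using norm_cauchy_schwarz_eq by blast
    have pnz: "norm p \<noteq> 0" using wpos[OF j] by (simp add: w_def p_def)
    have "?P (\<phi> i) = (norm (?P (\<phi> i)) / norm p) *\<^sub>R p"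
      using arg_cong[OF eq, of "\<lambda>v. (1 / norm p) *\<^sub>R v"] pnz by simp
    then have "K (?P (\<phi> i)) = K ((norm (?P (\<phi> i)) / norm p) *\<^sub>R p)"
      by (rule arg_cong)
    also have "\<dots> = (norm (?P (\<phi> i)) / norm p) *\<^sub>R K p"
      by (rule linear_scale[OF lin])
    finally have "K (?P (\<phi> i)) = (norm (?P (\<phi> i)) / norm p) *\<^sub>R K p" .
    then have "K (\<phi> i) = (norm (?P (\<phi> i)) / norm p) *\<^sub>R K (\<phi> j)"
      using proj_K[OF lin] p_def by simp
    then show False using distinct_dirs[rule_format, OF i j ij, of "norm (?P (\<phi> i)) / norm p"] by contradiction
  qed
  have "p \<bullet> ?P (\<phi> i) < norm p * norm (?P (\<phi> i))" using le ne by simp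
  then have "(p \<bullet> ?P (\<phi> i)) / norm (?P (\<phi> i)) < norm p"
    using wi by (simp add: divide_less_eq)
  then show "c j > c i" using ci cj by simp
qed

end
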